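(* Fix integers $n$ and $t$ with $n\ge 4$ and $3\le t\le n-1$. If $G$ is an $n$-vertex graph with minimum degree at least $1$ and $G\neq K_{1,n-1}$, then $i_t(G)<i_t(K_{1,n-1})$.
   Context: Graphs are simple, loopless and finite. $i_t(G)$ denotes the number of independent sets of size $t$ in $G$. $K_{1,n-1}$ is the star on $n$ vertices. *)

theory Defs
  imports Main
begin

definition simple_graph :: "'a set \<Rightarrow> 'a set set \<Rightarrow> bool" where
  "simple_graph V E \<longleftrightarrow> finite V \<and> (\<forall>e\<in>E. e \<subseteq> V \<and> card e = 2)"

definition degree :: "'a set set \<Rightarrow> 'a \<Rightarrow> nat" where
  "degree E v = card {e\<in>E. v \<in> e}"

definition independent_set :: "'a set \<Rightarrow> 'a set set \<Rightarrow> 'a set \<Rightarrow> bool" where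
  "independent_set V E S \<longleftrightarrow> S \<subseteq> V \<and> (\<forall>u\<in>S. \<forall>v\<in>S. {u, v} \<notin> E)"

definition ind_count :: "nat \<Rightarrow> 'a set \<Rightarrow> 'a set set \<Rightarrow> nat" where
  "ind_count t V E = card {S. independent_set V E S \<and> card S = t}"

definition star_edges :: "'a set \<Rightarrow> 'a \<Rightarrow> 'a set set" where
  "star_edges V c = {{c, v} | v. v \<in> V \<and> v \<noteq> c}"

text \<open>G is (isomorphic to) the star K_{1,n-1} on its own vertex set.\<close>
definition is_star :: "'a set \<Rightarrow> 'a set set \<Rightarrow> bool" where
  "is_star V E \<longleftrightarrow> (\<exists>c\<in>V. E = star_edges V c)"

end

theory Submission
  imports Defs
begin


definition nbrs :: "'a set \<Rightarrow> 'a set set \<Rightarrow> 'a \<Rightarrow> 'a set" where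
  "nbrs V E v = {w\<in>V. {v,w} \<in> E}"

lemma sg_fin: "simple_graph V E \<Longrightarrow> finite V" by (simp add: simple_graph_def)

lemma sg_single: "simple_graph V E \<Longrightarrow> {x} \<notin> E"
  by (auto simp: simple_graph_def)

lemma sg_edge: "simple_graph V E \<Longrightarrow> e \<in> E \<Longrightarrow> \<exists>x y. e = {x,y} \<and> x \<noteq> y \<and> x \<in> V \<and> y \<in> V"
  unfolding simple_graph_def by (metis card_2_iff insert_subset)

lemma sg_finE: "simple_graph V E \<Longrightarrow> finite E"
proof -
  assume sg: "simple_graph V E"
  hence "E \<subseteq> Pow V" by (auto simp: simple_graph_def)
  thus ?thesis using sg_fin[OF sg] finite_subset by blast
qed

lemma deg_nbrs:
  assumes sg: "simple_graph V E"
  shows "degree E v = card (nbrs V E v)"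
proof -
  have "(\<lambda>w. {v,w}) ` nbrs V E v = {e\<in>E. v \<in> e}"
  proof
    show "(\<lambda>w. {v,w}) ` nbrs V E v \<subseteq> {e\<in>E. v \<in> e}" by (auto simp: nbrs_def)
    show "{e\<in>E. v \<in> e} \<subseteq> (\<lambda>w. {v,w}) ` nbrs V E v"
    proof
      fix e assume e: "e \<in> {e\<in>E. v \<in> e}"
      then obtain x y where xy: "e = {x,y}" "x \<noteq> y" "x \<in> V" "y \<in> V" using sg_edge[OF sg] by blast
      show "e \<in> (\<lambda>w. {v,w}) ` nbrs V E v"
      proof (cases "v = x")
        case True thus ?thesis using e xy by (auto simp: nbrs_def)
      next
        case False
        hence "v = y" using e xy by auto
        thus ?thesis using e xy by (auto simp: nbrs_def insert_commute intro!: image_eqI[where x=x])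
      qed
    qed
  qed
  moreover have "inj_on (\<lambda>w. {v,w}) (nbrs V E v)"
    by (auto simp: inj_on_def doubleton_eq_iff)
  ultimately show ?thesis unfolding degree_def by (metis card_image)
qed

lemma nbrs_sub: "nbrs V E v \<subseteq> V" by (auto simp: nbrs_def)

lemma nbrs_notin: "simple_graph V E \<Longrightarrow> v \<notin> nbrs V E v"
  by (metis (no_types, lifting) insert_absorb2 mem_Collect_eq nbrs_def sg_single)

lemma univ_isets:
  assumes fin: "finite V" and u: "u \<in> V" and univ: "\<forall>w\<in>V. w\<noteq>u \<longrightarrow> {u,w}\<in>E" and t: "2 \<le> t"
  shows "{S. independent_set V E S \<and> card S = t} \<subseteq> {S. S \<subseteq> V - {u} \<and> card S = t}"
proof
  fix S assume S: "S \<in> {S. independent_set V E S \<and> card S = t}"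
  hence SV: "S \<subseteq> V" and ind: "\<forall>x\<in>S. \<forall>y\<in>S. {x,y}\<notin>E" and cS: "card S = t"
    by (auto simp: independent_set_def)
  have "u \<notin> S"
  proof
    assume uS: "u \<in> S"
    have "S - {u} \<noteq> {}"
    proof
      assume "S - {u} = {}"
      hence "S \<subseteq> {u}" by auto
      hence "card S \<le> card {u}" by (intro card_mono) auto
      hence "card S \<le> 1" by simp
      thus False using cS t by simp
    qed
    then obtain w where w: "w \<in> S" "w \<noteq> u" by auto
    hence "{u,w} \<in> E" using univ SV by auto
    thus False using ind uS w by auto
  qed
  thus "S \<in> {S. S \<subseteq> V - {u} \<and> card S = t}" using SV cS by auto
qed

lemma star_count:
  assumes fin: "finite V" and c: "c \<in> V" and t: "2 \<le> t"
  shows "ind_count t V (star_edges V c) = (card V - 1) choose t"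
proof -
  have "{S. independent_set V (star_edges V c) S \<and> card S = t} = {S. S \<subseteq> V - {c} \<and> card S = t}"
  proof
    show "{S. independent_set V (star_edges V c) S \<and> card S = t} \<subseteq> {S. S \<subseteq> V - {c} \<and> card S = t}"
      by (rule univ_isets[OF fin c _ t]) (auto simp: star_edges_def)
    show "{S. S \<subseteq> V - {c} \<and> card S = t} \<subseteq> {S. independent_set V (star_edges V c) S \<and> card S = t}"
      by (auto simp: independent_set_def star_edges_def doubleton_eq_iff)
  qed
  thus ?thesis unfolding ind_count_def using fin c by (simp add: n_subsets)
qed

lemma univ_case:
  assumes sg: "simple_graph V E" and u: "u \<in> V" and univ: "\<forall>w\<in>V. w\<noteq>u \<longrightarrow> {u,w}\<in>E"
    and ns: "\<not> is_star V E" and t: "2 \<le> t" and tn: "t \<le> card V - 1"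
  shows "ind_count t V E < (card V - 1) choose t"
proof -
  have fin: "finite V" using sg_fin[OF sg] .
  have "\<exists>e\<in>E. u \<notin> e"
  proof (rule ccontr)
    assume "\<not> (\<exists>e\<in>E. u \<notin> e)"
    hence all: "\<forall>e\<in>E. u \<in> e" by auto
    have "E = star_edges V u"
    proof
      show "E \<subseteq> star_edges V u"
      proof
        fix e assume e: "e \<in> E"
        then obtain x y where xy: "e = {x,y}" "x \<noteq> y" "x \<in> V" "y \<in> V" using sg_edge[OF sg] by blast
        have "u = x \<or> u = y" using all e xy by auto
        thus "e \<in> star_edges V u" using xy by (auto simp: star_edges_def insert_commute)
      qed
      show "star_edges V u \<subseteq> E" using univ by (auto simp: star_edges_def)
    qed
    thus False using ns u by (auto simp: is_star_def)
  qed
  then obtain e where e: "e \<in> E" "u \<notin> e" by blast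
  then obtain x y where xy: "e = {x,y}" "x \<noteq> y" "x \<in> V" "y \<in> V" using sg_edge[OF sg] by blast
  have "card (V - {u} - {x,y}) = card V - 3"
  proof -
    have "card (V - {u}) = card V - 1" using u fin by simp
    moreover have "{x,y} \<subseteq> V - {u}" using xy e by auto
    ultimately have "card (V - {u} - {x,y}) = card V - 1 - 2" using xy by (simp add: card_Diff_subset)
    thus ?thesis by simp
  qed
  hence "t - 2 \<le> card (V - {u} - {x,y})" using tn by simp
  then obtain T where T: "T \<subseteq> V - {u} - {x,y}" "card T = t - 2" "finite T" by (rule obtain_subset_with_card_n)
  define S where "S = insert x (insert y T)"
  have "x \<notin> T" "y \<notin> T" using T by auto
  hence cS: "card S = t" using T xy t unfolding S_def by simp
  have SV: "S \<subseteq> V - {u}" using T xy e unfolding S_def by auto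
  have nS: "\<not> independent_set V E S" using e xy unfolding S_def independent_set_def by auto
  have "{S. independent_set V E S \<and> card S = t} \<subset> {S. S \<subseteq> V - {u} \<and> card S = t}"
    using univ_isets[OF fin u univ t] cS SV nS by blast
  hence "card {S. independent_set V E S \<and> card S = t} < card {S. S \<subseteq> V - {u} \<and> card S = t}"
    by (rule psubset_card_mono[rotated]) (auto intro: finite_subset[of _ "Pow V"] simp: fin)
  thus ?thesis unfolding ind_count_def using fin u by (simp add: n_subsets)
qed



lemma ind_sub: "independent_set V E S \<Longrightarrow> T \<subseteq> S \<Longrightarrow> independent_set V E T"
  by (auto simp: independent_set_def)

lemma card_filter_sum: "finite A \<Longrightarrow> card {x\<in>A. P x} = (\<Sum>x\<in>A. if P x then 1 else 0)"
  by (simp add: sum.inter_filter[symmetric])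

lemma isets_fin: "finite V \<Longrightarrow> finite {S. independent_set V E S \<and> card S = t}"
  by (rule finite_subset[of _ "Pow V"]) (auto simp: independent_set_def)

lemma ratio_step:
  assumes sg: "simple_graph V E" and deg: "\<forall>v\<in>V. 1 \<le> degree E v" and t: "2 \<le> t" and tn: "t \<le> card V"
  shows "t * ind_count t V E \<le> (card V - t) * ind_count (t-1) V E"
proof -
  have fin: "finite V" using sg_fin[OF sg] .
  define A where "A = {S. independent_set V E S \<and> card S = t}"
  define B where "B = {S. independent_set V E S \<and> card S = t - 1}"
  have fA: "finite A" unfolding A_def using isets_fin[OF fin] .
  have fB: "finite B" unfolding B_def using isets_fin[OF fin] .
  have c1: "card {T\<in>B. T \<subseteq> S} = t" if S: "S \<in> A" for S
  proof -
    have "{T\<in>B. T \<subseteq> S} = {T. T \<subseteq> S \<and> card T = t - 1}"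
      using S unfolding A_def B_def by (auto intro: ind_sub)
    moreover have "finite S" using S fin unfolding A_def independent_set_def by (auto intro: finite_subset)
    ultimately have "card {T\<in>B. T \<subseteq> S} = t choose (t - 1)" using S unfolding A_def by (simp add: n_subsets)
    also have "\<dots> = t choose 1" using t by (subst binomial_symmetric) auto
    finally show ?thesis by simp
  qed
  have "t * card A = (\<Sum>S\<in>A. card {T\<in>B. T \<subseteq> S})" using c1 by simp
  also have "\<dots> = (\<Sum>S\<in>A. \<Sum>T\<in>B. if T \<subseteq> S then 1 else 0)"
    using fB by (simp add: card_filter_sum)
  also have "\<dots> = (\<Sum>T\<in>B. \<Sum>S\<in>A. if T \<subseteq> S then 1 else 0)" by (rule sum.swap)
  also have "\<dots> = (\<Sum>T\<in>B. card {S\<in>A. T \<subseteq> S})"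
    using fA by (simp add: card_filter_sum)
  also have "\<dots> \<le> (\<Sum>T\<in>B. card V - t)"
  proof (rule sum_mono)
    fix T assume T: "T \<in> B"
    hence TV: "T \<subseteq> V" and indT: "\<forall>x\<in>T. \<forall>y\<in>T. {x,y}\<notin>E" and cT: "card T = t - 1"
      unfolding B_def independent_set_def by auto
    have fT: "finite T" using TV fin by (auto intro: finite_subset)
    have "T \<noteq> {}" using cT t by auto
    then obtain x where x: "x \<in> T" by auto
    have "1 \<le> card (nbrs V E x)" using deg x TV deg_nbrs[OF sg] by auto
    hence "nbrs V E x \<noteq> {}" by auto
    then obtain y where y: "y \<in> V" "{x,y} \<in> E" unfolding nbrs_def by auto
    have yT: "y \<notin> T" using indT x y by auto
    have "{S\<in>A. T \<subseteq> S} \<subseteq> (\<lambda>z. insert z T) ` (V - T - {y})"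
    proof
      fix S assume S: "S \<in> {S\<in>A. T \<subseteq> S}"
      hence SV: "S \<subseteq> V" and indS: "\<forall>x\<in>S. \<forall>y\<in>S. {x,y}\<notin>E" and cS: "card S = t" and TS: "T \<subseteq> S"
        unfolding A_def independent_set_def by auto
      have "card (S - T) = 1" using cS cT TS fT t by (simp add: card_Diff_subset)
      then obtain z where z: "S - T = {z}" by (rule card_1_singletonE)
      have "z \<noteq> y" using z indS y x TS by auto
      moreover have "S = insert z T" using z TS by auto
      ultimately show "S \<in> (\<lambda>z. insert z T) ` (V - T - {y})" using z SV by auto
    qed
    hence "card {S\<in>A. T \<subseteq> S} \<le> card ((\<lambda>z. insert z T) ` (V - T - {y}))"
      by (intro card_mono) (auto simp: fin)
    also have "\<dots> \<le> card (V - T - {y})" by (rule card_image_le) (simp add: fin)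
    also have "\<dots> = card V - (t - 1) - 1" using TV cT fT y yT by (simp add: card_Diff_subset)
    finally show "card {S\<in>A. T \<subseteq> S} \<le> card V - t" using t by simp
  qed
  also have "\<dots> = (card V - t) * card B" by simp
  finally show ?thesis unfolding ind_count_def A_def B_def by (simp add: mult.commute)
qed



lemma two_choose2: "2 * (k choose 2) = k * (k - 1)"
  by (induction k) (auto simp: choose_two)

lemma six_choose3: "6 * (k choose 3) = k * (k - 1) * (k - 2)"
proof (induction k)
  case 0 thus ?case by simp
next
  case (Suc k)
  have "Suc k choose 3 = (k choose 2) + (k choose 3)"
    by (simp add: numeral_3_eq_3 numeral_2_eq_2)
  hence "6 * (Suc k choose 3) = 3 * (2 * (k choose 2)) + 6 * (k choose 3)" by simp
  also have "\<dots> = 3 * (k * (k - 1)) + k * (k - 1) * (k - 2)" using Suc two_choose2 by simp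
  also have "\<dots> = Suc k * (Suc k - 1) * (Suc k - 2)"
    by (cases k; cases "k - 1"; simp add: algebra_simps)
  finally show ?case .
qed

lemma sum_card_swap:
  assumes "finite F" "finite V" "\<forall>S\<in>F. S \<subseteq> V"
  shows "(\<Sum>S\<in>F. card S) = (\<Sum>v\<in>V. card {S\<in>F. v \<in> S})"
proof -
  have "(\<Sum>S\<in>F. card S) = (\<Sum>S\<in>F. \<Sum>v\<in>V. if v \<in> S then 1 else 0)"
  proof (rule sum.cong[OF refl])
    fix S assume "S \<in> F"
    hence "S = {v\<in>V. v \<in> S}" using assms by auto
    hence "card S = card {v\<in>V. v \<in> S}" by simp
    thus "card S = (\<Sum>v\<in>V. if v \<in> S then 1 else 0)" using assms by (simp add: card_filter_sum)
  qed
  also have "\<dots> = (\<Sum>v\<in>V. \<Sum>S\<in>F. if v \<in> S then 1 else 0)" by (rule sum.swap)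
  also have "\<dots> = (\<Sum>v\<in>V. card {S\<in>F. v \<in> S})" using assms by (simp add: card_filter_sum)
  finally show ?thesis .
qed

lemma handshake:
  assumes sg: "simple_graph V E"
  shows "(\<Sum>v\<in>V. degree E v) = 2 * card E"
proof -
  have "(\<Sum>e\<in>E. card e) = (\<Sum>v\<in>V. card {e\<in>E. v \<in> e})"
    by (rule sum_card_swap) (use sg sg_finE sg_fin in \<open>auto simp: simple_graph_def\<close>)
  moreover have "(\<Sum>e\<in>E. card e) = (\<Sum>e\<in>E. 2)" using sg by (auto simp: simple_graph_def)
  ultimately show ?thesis by (simp add: degree_def)
qed

lemma sum_Y:
  assumes sg: "simple_graph V E"
  shows "(\<Sum>v\<in>V. \<Sum>w\<in>nbrs V E v. degree E w) = (\<Sum>w\<in>V. degree E w * degree E w)"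
proof -
  have fin: "finite V" using sg_fin[OF sg] .
  have "(\<Sum>v\<in>V. \<Sum>w\<in>nbrs V E v. degree E w) = (\<Sum>v\<in>V. \<Sum>w\<in>V. if w \<in> nbrs V E v then degree E w else 0)"
    using fin by (simp add: nbrs_def sum.inter_filter)
  also have "\<dots> = (\<Sum>w\<in>V. \<Sum>v\<in>V. if w \<in> nbrs V E v then degree E w else 0)" by (rule sum.swap)
  also have "\<dots> = (\<Sum>w\<in>V. degree E w * card (nbrs V E w))"
  proof (rule sum.cong[OF refl])
    fix w assume w: "w \<in> V"
    have "{v\<in>V. w \<in> nbrs V E v} = nbrs V E w" using w by (auto simp: nbrs_def insert_commute)
    hence "(\<Sum>v\<in>V. if w \<in> nbrs V E v then degree E w else 0) = (\<Sum>v\<in>nbrs V E w. degree E w)"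
      using fin by (simp add: sum.inter_filter[symmetric])
    thus "(\<Sum>v\<in>V. if w \<in> nbrs V E v then degree E w else 0) = degree E w * card (nbrs V E w)" by simp
  qed
  also have "\<dots> = (\<Sum>w\<in>V. degree E w * degree E w)" using deg_nbrs[OF sg] by simp
  finally show ?thesis .
qed

definition Wv where "Wv V E v = V - insert v (nbrs V E v)"
definition Qv where "Qv V E v = {P. P \<subseteq> Wv V E v \<and> card P = 2 \<and> P \<notin> E}"

lemma card_through:
  assumes sg: "simple_graph V E" and v: "v \<in> V"
  shows "card {S\<in>{S. independent_set V E S \<and> card S = 3}. v \<in> S} = card (Qv V E v)"
proof -
  have "{S\<in>{S. independent_set V E S \<and> card S = 3}. v \<in> S} = insert v ` Qv V E v"
  proof
    show "{S\<in>{S. independent_set V E S \<and> card S = 3}. v \<in> S} \<subseteq> insert v ` Qv V E v"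
    proof
      fix S assume S: "S \<in> {S\<in>{S. independent_set V E S \<and> card S = 3}. v \<in> S}"
      hence SV: "S \<subseteq> V" and indS: "\<forall>x\<in>S. \<forall>y\<in>S. {x,y}\<notin>E" and cS: "card S = 3" and vS: "v \<in> S"
        unfolding independent_set_def by auto
      have fS: "finite S" using cS by (metis card.infinite zero_neq_numeral)
      have cP: "card (S - {v}) = 2" using cS vS fS by simp
      then obtain x y where xy: "S - {v} = {x,y}" "x \<noteq> y" by (auto simp: card_2_iff)
      have "S - {v} \<subseteq> Wv V E v" using SV indS vS unfolding Wv_def nbrs_def by auto
      moreover have "S - {v} \<notin> E" using xy indS by (metis Diff_subset insertCI subset_iff)
      ultimately have "S - {v} \<in> Qv V E v" using cP unfolding Qv_def by auto
      moreover have "S = insert v (S - {v})" using vS by auto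
      ultimately show "S \<in> insert v ` Qv V E v" by blast
    qed
    show "insert v ` Qv V E v \<subseteq> {S\<in>{S. independent_set V E S \<and> card S = 3}. v \<in> S}"
    proof
      fix S assume "S \<in> insert v ` Qv V E v"
      then obtain P where P: "P \<in> Qv V E v" "S = insert v P" by auto
      hence PW: "P \<subseteq> Wv V E v" and cP: "card P = 2" and PE: "P \<notin> E" unfolding Qv_def by auto
      obtain x y where xy: "P = {x,y}" "x \<noteq> y" using cP by (auto simp: card_2_iff)
      have xV: "x \<in> V" "x \<noteq> v" "{v,x} \<notin> E" using PW xy unfolding Wv_def nbrs_def by auto
      have yV: "y \<in> V" "y \<noteq> v" "{v,y} \<notin> E" using PW xy unfolding Wv_def nbrs_def by auto
      have ind: "independent_set V E S"
        unfolding independent_set_def P(2) xy(1)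
        using xV yV v PE xy sg_single[OF sg] by (auto simp: insert_commute)
      have "card S = 3" using P xy xV yV by simp
      thus "S \<in> {S\<in>{S. independent_set V E S \<and> card S = 3}. v \<in> S}" using ind P by auto
    qed
  qed
  moreover have "inj_on (insert v) (Qv V E v)"
  proof (rule inj_onI)
    fix P P' assume "P \<in> Qv V E v" "P' \<in> Qv V E v" "insert v P = insert v P'"
    moreover have "v \<notin> P" "v \<notin> P'" using calculation unfolding Qv_def Wv_def by auto
    ultimately show "P = P'" by (metis Diff_insert_absorb)
  qed
  ultimately show ?thesis by (simp add: card_image)
qed

lemma card_W:
  assumes sg: "simple_graph V E" and v: "v \<in> V"
  shows "card (Wv V E v) = card V - 1 - degree E v"
proof -
  have fin: "finite V" using sg_fin[OF sg] .
  have "card (insert v (nbrs V E v)) = Suc (degree E v)"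
    using nbrs_notin[OF sg, of v] deg_nbrs[OF sg, of v] finite_subset[OF nbrs_sub[of V E v] fin] by simp
  thus ?thesis unfolding Wv_def using v nbrs_sub[of V E v] fin
    by (simp add: card_Diff_subset finite_subset)
qed

lemma card_Q:
  assumes sg: "simple_graph V E" and v: "v \<in> V"
  shows "card (Qv V E v) + card {e\<in>E. e \<subseteq> Wv V E v} = (card V - 1 - degree E v) choose 2"
proof -
  have fin: "finite V" using sg_fin[OF sg] .
  have fW: "finite (Wv V E v)" using fin unfolding Wv_def by simp
  have sub: "{e\<in>E. e \<subseteq> Wv V E v} \<subseteq> {P. P \<subseteq> Wv V E v \<and> card P = 2}"
    using sg by (auto simp: simple_graph_def)
  have Qeq: "Qv V E v = {P. P \<subseteq> Wv V E v \<and> card P = 2} - {e\<in>E. e \<subseteq> Wv V E v}"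
    unfolding Qv_def by auto
  have fF: "finite {P. P \<subseteq> Wv V E v \<and> card P = 2}" using fW by (auto intro: finite_subset[of _ "Pow (Wv V E v)"])
  have "card (Qv V E v) = card {P. P \<subseteq> Wv V E v \<and> card P = 2} - card {e\<in>E. e \<subseteq> Wv V E v}"
    unfolding Qeq using sub fF by (simp add: card_Diff_subset finite_subset)
  moreover have "card {e\<in>E. e \<subseteq> Wv V E v} \<le> card {P. P \<subseteq> Wv V E v \<and> card P = 2}"
    using sub fF by (simp add: card_mono)
  moreover have "card {P. P \<subseteq> Wv V E v \<and> card P = 2} = (card V - 1 - degree E v) choose 2"
    using fW card_W[OF sg v] by (simp add: n_subsets)
  ultimately show ?thesis by simp
qed

lemma X_bound:
  assumes sg: "simple_graph V E" and v: "v \<in> V"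
  shows "card E \<le> card {e\<in>E. e \<subseteq> Wv V E v} + (\<Sum>w\<in>nbrs V E v. degree E w)"
proof -
  have fin: "finite V" using sg_fin[OF sg] .
  have fE: "finite E" using sg_finE[OF sg] .
  have fN: "finite (nbrs V E v)" using finite_subset[OF nbrs_sub fin] .
  have "E - {e\<in>E. e \<subseteq> Wv V E v} \<subseteq> (\<Union>w\<in>nbrs V E v. {e\<in>E. w \<in> e})"
  proof
    fix e assume e: "e \<in> E - {e\<in>E. e \<subseteq> Wv V E v}"
    hence eE: "e \<in> E" and eW: "\<not> e \<subseteq> Wv V E v" by blast+
    obtain x y where xy: "e = {x,y}" "x \<noteq> y" "x \<in> V" "y \<in> V" using sg_edge[OF sg eE] by blast
    have "\<exists>z\<in>e. z \<in> V \<and> z \<notin> Wv V E v" using eW xy by blast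
    hence "x \<in> insert v (nbrs V E v) \<or> y \<in> insert v (nbrs V E v)" using xy unfolding Wv_def by blast
    moreover have "x = v \<Longrightarrow> y \<in> nbrs V E v" using eE xy unfolding nbrs_def by blast
    moreover have "y = v \<Longrightarrow> x \<in> nbrs V E v"
    proof -
      assume "y = v"
      hence "{v,x} \<in> E" using eE xy by (metis insert_commute)
      thus ?thesis using xy unfolding nbrs_def by blast
    qed
    ultimately have "x \<in> nbrs V E v \<or> y \<in> nbrs V E v" by blast
    thus "e \<in> (\<Union>w\<in>nbrs V E v. {e\<in>E. w \<in> e})" using eE xy by blast
  qed
  hence "card (E - {e\<in>E. e \<subseteq> Wv V E v}) \<le> card (\<Union>w\<in>nbrs V E v. {e\<in>E. w \<in> e})"
    by (intro card_mono) (use fE fN in simp_all)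
  also have "\<dots> \<le> (\<Sum>w\<in>nbrs V E v. card {e\<in>E. w \<in> e})" by (rule card_UN_le[OF fN])
  finally have A: "card (E - {e\<in>E. e \<subseteq> Wv V E v}) \<le> (\<Sum>w\<in>nbrs V E v. degree E w)" by (simp add: degree_def)
  have B: "card (E - {e\<in>E. e \<subseteq> Wv V E v}) = card E - card {e\<in>E. e \<subseteq> Wv V E v}"
    using fE by (intro card_Diff_subset) auto
  have C: "card {e\<in>E. e \<subseteq> Wv V E v} \<le> card E" using fE by (intro card_mono) auto
  show ?thesis using A B C by linarith
qed



lemma vert_ineq:
  fixes n d :: int
  assumes "1 \<le> d" "d \<le> n - 2"
  shows "(n - 1 - d) * (n - 2 - d) + 2 * d * d - n * d \<le> (n - 2) * (n - 4)"
proof -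
  have "0 \<le> (d - 1) * ((n - 2) - d)" using assms by simp
  thus ?thesis by (simp add: algebra_simps)
qed

lemma calc6:
  fixes V :: "'a set" and d Y q :: "'a \<Rightarrow> nat" and n m cA :: nat
  assumes fin: "finite V" and n_def: "n = card V" and n4: "4 \<le> n"
    and a: "3 * cA = (\<Sum>v\<in>V. q v)"
    and per: "\<And>v. v \<in> V \<Longrightarrow> int (2 * q v) \<le> (int n - 1 - int (d v)) * (int n - 2 - int (d v)) - 2 * int m + 2 * int (Y v)"
    and e: "(\<Sum>v\<in>V. d v) = 2 * m"
    and dY: "(\<Sum>v\<in>V. Y v) = (\<Sum>v\<in>V. d v * d v)"
    and dge: "\<And>v. v \<in> V \<Longrightarrow> 1 \<le> d v" and dle: "\<And>v. v \<in> V \<Longrightarrow> d v \<le> n - 2"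
  shows "6 * cA < 6 * ((n - 1) choose 3)"
proof -
  define f where "f v = (int n - 1 - int (d v)) * (int n - 2 - int (d v))" for v
  have s1: "int (6 * cA) = (\<Sum>v\<in>V. int (2 * q v))"
  proof -
    have "6 * cA = (\<Sum>v\<in>V. 2 * q v)" using a by (simp add: sum_distrib_left[symmetric])
    thus ?thesis by (simp only: of_nat_sum)
  qed
  have s2: "(\<Sum>v\<in>V. int (2 * q v)) \<le> (\<Sum>v\<in>V. f v - 2 * int m + 2 * int (Y v))"
    by (rule sum_mono) (use per f_def in simp)
  have s3: "(\<Sum>v\<in>V. f v - 2 * int m + 2 * int (Y v)) = (\<Sum>v\<in>V. f v) - int n * (2 * int m) + 2 * (\<Sum>v\<in>V. int (Y v))"
    by (simp add: sum.distrib sum_subtractf sum_distrib_left n_def)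
  have e': "(\<Sum>v\<in>V. int (d v)) = 2 * int m"
  proof -
    have "int (\<Sum>v\<in>V. d v) = int (2 * m)" using e by simp
    thus ?thesis by (simp only: of_nat_sum)
  qed
  have dY': "(\<Sum>v\<in>V. int (Y v)) = (\<Sum>v\<in>V. int (d v) * int (d v))"
  proof -
    have "int (\<Sum>v\<in>V. Y v) = int (\<Sum>v\<in>V. d v * d v)" using dY by simp
    thus ?thesis by (simp only: of_nat_sum of_nat_mult)
  qed
  have s4: "(\<Sum>v\<in>V. f v) - int n * (2 * int m) + 2 * (\<Sum>v\<in>V. int (Y v))
      = (\<Sum>v\<in>V. f v + 2 * int (d v) * int (d v) - int n * int (d v))"
    unfolding e'[symmetric] dY' by (simp add: sum.distrib sum_subtractf sum_distrib_left mult.assoc)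
  have s5: "(\<Sum>v\<in>V. f v + 2 * int (d v) * int (d v) - int n * int (d v)) \<le> (\<Sum>v\<in>V. (int n - 2) * (int n - 4))"
  proof (rule sum_mono)
    fix v assume v: "v \<in> V"
    have "1 \<le> int (d v)" using dge[OF v] by simp
    moreover have "int (d v) \<le> int n - 2" using dle[OF v] n4 by linarith
    ultimately show "f v + 2 * int (d v) * int (d v) - int n * int (d v) \<le> (int n - 2) * (int n - 4)"
      unfolding f_def by (rule vert_ineq)
  qed
  have s6: "(\<Sum>v\<in>V. (int n - 2) * (int n - 4)) = int n * ((int n - 2) * (int n - 4))" by (simp add: n_def)
  have s7: "int n * ((int n - 2) * (int n - 4)) < (int n - 1) * (int n - 2) * (int n - 3)"
  proof -
    have "0 < int n - 2" using n4 by simp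
    hence "int n * (int n - 4) * (int n - 2) < (int n - 1) * (int n - 3) * (int n - 2)"
      by (intro mult_strict_right_mono) (simp_all add: algebra_simps)
    thus ?thesis by (simp add: algebra_simps)
  qed
  have s8: "(int n - 1) * (int n - 2) * (int n - 3) = int (6 * ((n - 1) choose 3))"
  proof -
    have "6 * ((n - 1) choose 3) = (n - 1) * (n - 1 - 1) * (n - 1 - 2)" by (rule six_choose3)
    moreover have "int (n - 1) = int n - 1" "int (n - 1 - 1) = int n - 2" "int (n - 1 - 2) = int n - 3"
      using n4 by linarith+
    ultimately show ?thesis by (simp only: of_nat_mult)
  qed
  have "int (6 * cA) < int (6 * ((n - 1) choose 3))"
    using s1 s2 s3 s4 s5 s6 s7 s8 by linarith
  thus ?thesis by linarith
qed

lemma base3: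
  assumes sg: "simple_graph V E" and deg: "\<forall>v\<in>V. 1 \<le> degree E v"
    and nu: "\<forall>v\<in>V. \<exists>w\<in>V. w \<noteq> v \<and> {v,w} \<notin> E" and n4: "4 \<le> card V"
  shows "ind_count 3 V E < (card V - 1) choose 3"
proof -
  have fin: "finite V" using sg_fin[OF sg] .
  define n where "n = card V"
  define m where "m = card E"
  define A where "A = {S. independent_set V E S \<and> card S = 3}"
  define X where "X v = card {e\<in>E. e \<subseteq> Wv V E v}" for v
  define Y where "Y v = (\<Sum>w\<in>nbrs V E v. degree E w)" for v
  define d where "d v = degree E v" for v
  define q where "q v = card (Qv V E v)" for v
  have fA: "finite A" unfolding A_def using isets_fin[OF fin] .
  have a: "3 * card A = (\<Sum>v\<in>V. q v)"
  proof -
    have "(\<Sum>S\<in>A. card S) = (\<Sum>v\<in>V. card {S\<in>A. v \<in> S})"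
      by (rule sum_card_swap[OF fA fin]) (auto simp: A_def independent_set_def)
    moreover have "(\<Sum>S\<in>A. card S) = 3 * card A" by (simp add: A_def)
    moreover have "card {S\<in>A. v \<in> S} = q v" if "v \<in> V" for v
      unfolding A_def q_def using card_through[OF sg that] .
    ultimately show ?thesis by simp
  qed
  have dle: "d v \<le> n - 2" if v: "v \<in> V" for v
  proof -
    obtain w where w: "w \<in> V" "w \<noteq> v" "{v,w} \<notin> E" using nu v by blast
    have "nbrs V E v \<subseteq> V - {v, w}" using w nbrs_notin[OF sg, of v] nbrs_sub[of V E v]
      unfolding nbrs_def by auto
    hence "card (nbrs V E v) \<le> card (V - {v,w})" using fin by (intro card_mono) auto
    also have "\<dots> = n - 2" using v w fin unfolding n_def by (simp add: card_Diff_subset)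
    finally show ?thesis unfolding d_def using deg_nbrs[OF sg] by simp
  qed
  have dge: "1 \<le> d v" if "v \<in> V" for v using deg that unfolding d_def by auto
  have per: "int (2 * q v) \<le> (int n - 1 - int (d v)) * (int n - 2 - int (d v)) - 2 * int m + 2 * int (Y v)"
    if v: "v \<in> V" for v
  proof -
    have b: "q v + X v = (n - 1 - d v) choose 2" using card_Q[OF sg v] unfolding q_def X_def n_def d_def .
    have c: "m \<le> X v + Y v" using X_bound[OF sg v] unfolding m_def X_def Y_def .
    define K where "K = (n - 1 - d v) * (n - 1 - d v - 1)"
    have "2 * q v + 2 * X v = K" unfolding K_def using b two_choose2 by (metis add_mult_distrib2)
    hence "int (2 * q v) + 2 * int (X v) = int K" by linarith
    moreover have "int K = (int n - 1 - int (d v)) * (int n - 2 - int (d v))"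
    proof -
      have h1: "int (n - 1 - d v) = int n - 1 - int (d v)" using dle[OF v] n4 n_def by linarith
      have h2: "int (n - 1 - d v - 1) = int n - 2 - int (d v)" using dle[OF v] n4 n_def by linarith
      show ?thesis unfolding K_def of_nat_mult h1 h2 ..
    qed
    ultimately show ?thesis using c by linarith
  qed
  have e: "(\<Sum>v\<in>V. d v) = 2 * m" unfolding d_def m_def using handshake[OF sg] .
  have dY: "(\<Sum>v\<in>V. Y v) = (\<Sum>v\<in>V. d v * d v)" unfolding Y_def d_def using sum_Y[OF sg] .
  have "6 * card A < 6 * ((n - 1) choose 3)"
    by (rule calc6[OF fin n_def _ a per e dY dge dle]) (use n4 n_def in simp_all)
  thus ?thesis unfolding ind_count_def A_def n_def by simp
qed


lemma nonuniv_case: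
  assumes sg: "simple_graph V E" and deg: "\<forall>v\<in>V. 1 \<le> degree E v"
    and nu: "\<forall>v\<in>V. \<exists>w\<in>V. w \<noteq> v \<and> {v,w} \<notin> E" and n4: "4 \<le> card V"
    and k3: "3 \<le> k" and kn: "k \<le> card V - 1"
  shows "ind_count k V E < (card V - 1) choose k"
  using k3 kn
proof (induction k rule: dec_induct)
  case base
  thus ?case using base3[OF sg deg nu n4] by simp
next
  case (step k)
  have IH: "ind_count k V E < (card V - 1) choose k" using step by simp
  have "Suc k * ind_count (Suc k) V E \<le> (card V - Suc k) * ind_count (Suc k - 1) V E"
    by (rule ratio_step[OF sg deg]) (use step.prems step.hyps in simp_all)
  hence st: "Suc k * ind_count (Suc k) V E \<le> (card V - Suc k) * ind_count k V E" by simp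
  have bin: "Suc k * ((card V - 1) choose Suc k) = (card V - Suc k) * ((card V - 1) choose k)"
  proof -
    have e1: "Suc (k + (card V - 1 - Suc k)) = card V - 1" using step.prems by simp
    have e2: "Suc (card V - 1 - Suc k) = card V - Suc k" using step.prems by simp
    show ?thesis using Suc_times_binomial_add[of k "card V - 1 - Suc k"] unfolding e1 e2 .
  qed
  have pos: "0 < card V - Suc k" using step.prems by simp
  have "Suc k * ind_count (Suc k) V E < Suc k * ((card V - 1) choose Suc k)"
    using st bin IH pos by (metis mult_less_cancel1 order_le_less_trans)
  thus ?case by (metis mult_less_cancel1)
qed

theorem mainTheorem6:
  fixes V :: "'a set" and E :: "'a set set" and n t :: nat and c :: 'a
  assumes "simple_graph V E"
    and "card V = n"
    and "n \<ge> 4"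
    and "3 \<le> t" and "t \<le> n - 1"
    and "\<forall>v\<in>V. degree E v \<ge> 1"
    and "\<not> is_star V E"
    and "c \<in> V"
  shows "ind_count t V E < ind_count t V (star_edges V c)"
proof -
  have fin: "finite V" using sg_fin[OF assms(1)] .
  have star: "ind_count t V (star_edges V c) = (card V - 1) choose t"
    using star_count[OF fin assms(8)] assms(4) by simp
  show ?thesis
  proof (cases "\<exists>u\<in>V. \<forall>w\<in>V. w\<noteq>u \<longrightarrow> {u,w}\<in>E")
    case True
    then obtain u where u: "u \<in> V" "\<forall>w\<in>V. w\<noteq>u \<longrightarrow> {u,w}\<in>E" by blast
    show ?thesis unfolding star using univ_case[OF assms(1) u assms(7)] assms by simp
  next
    case False
    hence nu: "\<forall>v\<in>V. \<exists>w\<in>V. w \<noteq> v \<and> {v,w} \<notin> E" by blast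
    show ?thesis unfolding star using nonuniv_case[OF assms(1) _ nu] assms by simp
  qed
qed

end
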